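(* Let $X$ be a real Banach space with dual $X^*$, and let $f:X\to\mathbb{R}\cup\{+\infty\}$ be a proper, convex and lower semicontinuous function. Suppose that \[ p(x)\ge 0\quad\text{for every } x\in\operatorname{dom}\partial f \text{ and every } p\in\partial f(x). \] Then $0\in\partial f(0)$.
   Context: For $x_0\in\operatorname{dom} f:=\{x\in X: f(x)\neq+\infty\}$, the (convex-analysis) subdifferential is $\partial f(x_0):=\{p\in X^*: f(x)\ge f(x_0)+p(x-x_0)\ \forall x\in X\}$; if $x_0\notin\operatorname{dom} f$ then $\partial f(x_0)=\emptyset$. The set $\operatorname{dom}\partial f:=\{x\in X:\partial f(x)\neq\emptyset\}$. The hypothesis is written in the paper as $\langle \partial f(x),x\rangle\ge 0$ for all $x\in\operatorname{dom}\partial f$. *)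

theory Defs
  imports "HOL-Analysis.Analysis"
begin

text \<open>Functions X \<rightarrow> R \<union> {+\<infinity>} are modelled as maps into ereal that never take the value -\<infinity>.\<close>

definition proper_fun :: "('a \<Rightarrow> ereal) \<Rightarrow> bool" where
  "proper_fun f \<longleftrightarrow> (\<forall>x. f x \<noteq> -\<infinity>) \<and> (\<exists>x. f x \<noteq> \<infinity>)"

definition convex_fun :: "('a::real_vector \<Rightarrow> ereal) \<Rightarrow> bool" where
  "convex_fun f \<longleftrightarrow> (\<forall>x y t. 0 \<le> t \<and> t \<le> 1 \<longrightarrow>
      f ((1 - t) *\<^sub>R x + t *\<^sub>R y) \<le> ereal (1 - t) * f x + ereal t * f y)"

definition lsc_fun :: "('a::topological_space \<Rightarrow> ereal) \<Rightarrow> bool" where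
  "lsc_fun f \<longleftrightarrow> (\<forall>x0. \<forall>c < f x0. eventually (\<lambda>x. c < f x) (at x0))"

definition subdiff :: "('a::real_normed_vector \<Rightarrow> ereal) \<Rightarrow> 'a \<Rightarrow> ('a \<Rightarrow> real) set" where
  "subdiff f x0 = (if f x0 = \<infinity> then {} else
     {p. bounded_linear p \<and> (\<forall>x. f x \<ge> f x0 + ereal (p (x - x0)))})"

end

theory Submission
  imports Defs
begin

definition goodG :: "('a::real_vector \<Rightarrow> real) \<Rightarrow> ('a \<times> real) set \<Rightarrow> bool" where
  "goodG h G \<longleftrightarrow> (\<forall>x a b. (x,a)\<in>G \<longrightarrow> (x,b)\<in>G \<longrightarrow> a = b) \<and> (0,0) \<in> G \<and>
     (\<forall>x y a b. (x,a)\<in>G \<longrightarrow> (y,b)\<in>G \<longrightarrow> (x+y,a+b)\<in>G) \<and>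
     (\<forall>x a c. (x,a)\<in>G \<longrightarrow> (c *\<^sub>R x, c*a)\<in>G) \<and> (\<forall>x a. (x,a)\<in>G \<longrightarrow> a \<le> h x)"

lemma goodG_chain:
  assumes C: "C \<in> chains {G. goodG h G}" and ne: "C \<noteq> {}"
  shows "goodG h (\<Union>C)"
proof -
  have sub: "\<And>G. G \<in> C \<Longrightarrow> goodG h G" using C by (auto simp: chains_def)
  have ch: "\<And>A B. A \<in> C \<Longrightarrow> B \<in> C \<Longrightarrow> A \<subseteq> B \<or> B \<subseteq> A"
    using C by (auto simp: chains_def chain_subset_def)
  show ?thesis unfolding goodG_def
  proof (intro conjI allI impI)
    fix x a b assume "(x,a) \<in> \<Union>C" "(x,b) \<in> \<Union>C"
    then obtain A B where "A\<in>C" "B\<in>C" "(x,a)\<in>A" "(x,b)\<in>B" by auto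
    then show "a = b" using ch[of A B] sub[of A] sub[of B] unfolding goodG_def by (metis subsetD)
  next
    show "(0,0) \<in> \<Union>C" using ne sub unfolding goodG_def by blast
  next
    fix x y a b assume "(x,a) \<in> \<Union>C" "(y,b) \<in> \<Union>C"
    then obtain A B where "A\<in>C" "B\<in>C" "(x,a)\<in>A" "(y,b)\<in>B" by auto
    then show "(x+y,a+b) \<in> \<Union>C" using ch[of A B] sub[of A] sub[of B] unfolding goodG_def by (metis UnionI subsetD)
  next
    fix x a c assume "(x,a) \<in> \<Union>C"
    then show "(c *\<^sub>R x, c*a) \<in> \<Union>C" using sub unfolding goodG_def by blast
  next
    fix x a assume "(x,a) \<in> \<Union>C"
    then show "a \<le> h x" using sub unfolding goodG_def by blast
  qed
qed

lemma goodG_ext: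
  fixes h :: "'a::real_vector \<Rightarrow> real"
  assumes cvx: "\<And>x y t. 0 \<le> t \<Longrightarrow> t \<le> 1 \<Longrightarrow> h ((1-t) *\<^sub>R x + t *\<^sub>R y) \<le> (1-t) * h x + t * h y"
    and G: "goodG h G" and x0: "\<forall>a. (x0,a) \<notin> G"
  shows "\<exists>G'. goodG h G' \<and> G \<subseteq> G' \<and> G' \<noteq> G"
proof -
  have fn: "\<And>x a b. (x,a)\<in>G \<Longrightarrow> (x,b)\<in>G \<Longrightarrow> a = b" and z: "(0,0)\<in>G"
    and add: "\<And>x y a b. (x,a)\<in>G \<Longrightarrow> (y,b)\<in>G \<Longrightarrow> (x+y,a+b)\<in>G"
    and sc: "\<And>x a c. (x,a)\<in>G \<Longrightarrow> (c *\<^sub>R x, c*a)\<in>G"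
    and dom: "\<And>x a. (x,a)\<in>G \<Longrightarrow> a \<le> h x" using G unfolding goodG_def by blast+
  have key: "(b - h (y - s *\<^sub>R x0)) / s \<le> (h (x + t *\<^sub>R x0) - a) / t"
    if "(x,a)\<in>G" "(y,b)\<in>G" "s > 0" "t > 0" for x a y b s t
  proof -
    define l where "l = t/(s+t)"
    define mu where "mu = s/(s+t)"
    have e1: "1 - mu = l" unfolding l_def mu_def using that by (simp add: field_simps)
    have e2: "mu * t - l * s = 0" unfolding l_def mu_def by simp
    have mu01: "0 \<le> mu" "mu \<le> 1" unfolding mu_def using that by auto
    have m: "(l *\<^sub>R y + mu *\<^sub>R x, l*b + mu*a) \<in> G"
      using add[OF sc[OF that(2)] sc[OF that(1)]] .
    have eq0: "l *\<^sub>R (y - s *\<^sub>R x0) + mu *\<^sub>R (x + t *\<^sub>R x0) = l *\<^sub>R y + mu *\<^sub>R x + (mu * t - l * s) *\<^sub>R x0"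
      by (simp add: algebra_simps)
    have eq: "(1 - mu) *\<^sub>R (y - s *\<^sub>R x0) + mu *\<^sub>R (x + t *\<^sub>R x0) = l *\<^sub>R y + mu *\<^sub>R x"
      unfolding e1 eq0 e2 by simp
    have c1: "h ((1 - mu) *\<^sub>R (y - s *\<^sub>R x0) + mu *\<^sub>R (x + t *\<^sub>R x0)) \<le> (1 - mu) * h (y - s *\<^sub>R x0) + mu * h (x + t *\<^sub>R x0)"
      by (rule cvx[OF mu01])
    have "l*b + mu*a \<le> l * h (y - s *\<^sub>R x0) + mu * h (x + t *\<^sub>R x0)"
      using dom[OF m] c1[unfolded eq] unfolding e1 by linarith
    then have "(t*b + s*a)/(s+t) \<le> (t * h (y - s *\<^sub>R x0) + s * h (x + t *\<^sub>R x0))/(s+t)"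
      unfolding l_def mu_def by (simp add: add_divide_distrib)
    then have "t*b + s*a \<le> t * h (y - s *\<^sub>R x0) + s * h (x + t *\<^sub>R x0)"
      using that by (simp add: divide_le_cancel)
    then have "t*(b - h (y - s *\<^sub>R x0)) \<le> s*(h (x + t *\<^sub>R x0) - a)"
      by (simp add: algebra_simps)
    then show ?thesis using that by (simp add: divide_simps mult.commute)
  qed
  define L where "L = {(b - h (y - s *\<^sub>R x0)) / s | y b s. (y,b)\<in>G \<and> s > 0}"
  have Lmem: "(0 - h (0 - 1 *\<^sub>R x0)) / 1 \<in> L" unfolding L_def
    by (rule CollectI, rule exI[of _ 0], rule exI[of _ 0], rule exI[of _ 1]) (simp add: z)
  then have Lne: "L \<noteq> {}" by blast
  have Lbdd: "bdd_above L" unfolding L_def bdd_above_def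
  proof (rule exI[of _ "(h (0 + 1 *\<^sub>R x0) - 0) / 1"], safe)
    fix y b s assume "(y,b) \<in> G" "0 < (s::real)"
    then show "(b - h (y - s *\<^sub>R x0)) / s \<le> (h (0 + 1 *\<^sub>R x0) - 0) / 1"
      using key[OF z, of y b s 1] by simp
  qed
  define c where "c = Sup L"
  have up: "\<And>l. l \<in> L \<Longrightarrow> l \<le> c" unfolding c_def using Lbdd by (simp add: cSup_upper)
  have lo: "c \<le> (h (x + t *\<^sub>R x0) - a) / t" if "(x,a)\<in>G" "t > 0" for x a t
    unfolding c_def using Lne
  proof (rule cSup_least)
    fix l assume "l \<in> L"
    then obtain y b s where "l = (b - h (y - s *\<^sub>R x0)) / s" "(y,b)\<in>G" "s > 0" unfolding L_def by blast
    then show "l \<le> (h (x + t *\<^sub>R x0) - a) / t" using key[OF that(1) _ _ that(2)] by blast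
  qed
  have domc: "a + t * c \<le> h (x + t *\<^sub>R x0)" if "(x,a)\<in>G" for x a t
  proof (cases "t > 0")
    case True then show ?thesis using lo[OF that True] by (simp add: field_simps)
  next
    case False
    show ?thesis
    proof (cases "t = 0")
      case True then show ?thesis using dom[OF that] by simp
    next
      case F2: False
      with False have s: "-t > 0" by simp
      have "(a - h (x - (-t) *\<^sub>R x0)) / (-t) \<in> L" unfolding L_def using that s by blast
      then have "(a - h (x - (-t) *\<^sub>R x0)) / (-t) \<le> c" by (rule up)
      then show ?thesis using s by (simp add: field_simps)
    qed
  qed
  define G' where "G' = {(x + t *\<^sub>R x0, a + t * c) | x a t. (x,a)\<in>G}"
  have x0n: "(x,a) \<in> G \<Longrightarrow> x = t *\<^sub>R x0 \<Longrightarrow> t = 0" for x a t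
  proof (rule ccontr)
    assume "(x,a)\<in>G" "x = t *\<^sub>R x0" "t \<noteq> 0"
    then have "((1/t) *\<^sub>R x, (1/t)*a) \<in> G" using sc by blast
    then show False using x0 \<open>x = t *\<^sub>R x0\<close> \<open>t\<noteq>0\<close> by simp
  qed
  have "goodG h G'" unfolding goodG_def
  proof (intro conjI allI impI)
    fix x a b assume A1: "(x,a)\<in>G'" and A2: "(x,b)\<in>G'"
    obtain y1 a1 t1 where e1: "(y1,a1)\<in>G" "x = y1 + t1 *\<^sub>R x0" "a = a1 + t1*c" using A1 unfolding G'_def by blast
    obtain y2 a2 t2 where e2: "(y2,a2)\<in>G" "x = y2 + t2 *\<^sub>R x0" "b = a2 + t2*c" using A2 unfolding G'_def by blast
    note e = e1(1) e2(1) e1(2) e2(2) e1(3) e2(3)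
    have "(y1 + (-y2), a1 + (-1)*a2) \<in> G" using add[OF e(1) sc[OF e(2), of "-1"]] by simp
    moreover have "y1 + (-y2) = (t2 - t1) *\<^sub>R x0" using e(3,4) by (simp add: algebra_simps)
    ultimately have "t2 - t1 = 0" using x0n by blast
    then have "t1 = t2" "y1 = y2" using e(3,4) by auto
    then show "a = b" using e fn by auto
  next
    show "(0,0) \<in> G'" unfolding G'_def using z by force
  next
    fix x y a b assume "(x,a)\<in>G'" "(y,b)\<in>G'"
    then obtain y1 a1 t1 y2 a2 t2 where e: "(y1,a1)\<in>G" "(y2,a2)\<in>G" "x = y1 + t1 *\<^sub>R x0" "y = y2 + t2 *\<^sub>R x0"
      "a = a1 + t1*c" "b = a2 + t2*c" unfolding G'_def by blast
    have "(x+y, a+b) = ((y1+y2) + (t1+t2) *\<^sub>R x0, (a1+a2) + (t1+t2)*c)"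
      using e by (simp add: algebra_simps scaleR_add_left)
    then show "(x+y,a+b) \<in> G'" unfolding G'_def using add[OF e(1,2)] by blast
  next
    fix x a r assume "(x,a)\<in>G'"
    then obtain y1 a1 t1 where e: "(y1,a1)\<in>G" "x = y1 + t1 *\<^sub>R x0" "a = a1 + t1*c" unfolding G'_def by auto
    have "(r *\<^sub>R x, r*a) = (r *\<^sub>R y1 + (r*t1) *\<^sub>R x0, r*a1 + (r*t1)*c)"
      using e by (simp add: algebra_simps)
    then show "(r *\<^sub>R x, r*a) \<in> G'" unfolding G'_def using sc[OF e(1)] by blast
  next
    fix x a assume "(x,a)\<in>G'"
    then obtain y1 a1 t1 where e: "(y1,a1)\<in>G" "x = y1 + t1 *\<^sub>R x0" "a = a1 + t1*c" unfolding G'_def by auto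
    then show "a \<le> h x" using domc by simp
  qed
  moreover have "G \<subseteq> G'" unfolding G'_def by (force intro: exI[of _ 0])
  moreover have "(x0, c) \<in> G'" unfolding G'_def using z by (force intro: exI[of _ 1])
  ultimately show ?thesis using x0 by blast
qed

lemma HB:
  fixes h :: "'a::real_vector \<Rightarrow> real"
  assumes cvx: "\<And>x y t. 0 \<le> t \<Longrightarrow> t \<le> 1 \<Longrightarrow> h ((1-t) *\<^sub>R x + t *\<^sub>R y) \<le> (1-t) * h x + t * h y"
    and h0: "0 \<le> h 0"
  shows "\<exists>p. linear p \<and> (\<forall>x. p x \<le> h x)"
proof -
  have g0: "goodG h {(0,0)}" using h0 unfolding goodG_def by auto
  have "\<forall>C\<in>chains {G. goodG h G}. \<exists>U\<in>{G. goodG h G}. \<forall>X\<in>C. X \<subseteq> U"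
  proof
    fix C assume C: "C \<in> chains {G. goodG h G}"
    show "\<exists>U\<in>{G. goodG h G}. \<forall>X\<in>C. X \<subseteq> U"
    proof (cases "C = {}")
      case True then show ?thesis using g0 by auto
    next
      case False then show ?thesis using goodG_chain[OF C False] by blast
    qed
  qed
  from Zorn_Lemma2[OF this] obtain M where M: "goodG h M" and mx: "\<And>X. goodG h X \<Longrightarrow> M \<subseteq> X \<Longrightarrow> X = M"
    by blast
  have tot: "\<exists>a. (x,a) \<in> M" for x
  proof (rule ccontr)
    assume "\<nexists>a. (x, a) \<in> M"
    then obtain G' where "goodG h G'" "M \<subseteq> G'" "G' \<noteq> M" using goodG_ext[OF cvx M] by blast
    then show False using mx by blast
  qed
  have fn: "\<And>x a b. (x,a)\<in>M \<Longrightarrow> (x,b)\<in>M \<Longrightarrow> a = b"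
    and add: "\<And>x y a b. (x,a)\<in>M \<Longrightarrow> (y,b)\<in>M \<Longrightarrow> (x+y,a+b)\<in>M"
    and sc: "\<And>x a c. (x,a)\<in>M \<Longrightarrow> (c *\<^sub>R x, c*a)\<in>M"
    and dom: "\<And>x a. (x,a)\<in>M \<Longrightarrow> a \<le> h x" using M unfolding goodG_def by blast+
  define p where "p x = (THE a. (x,a) \<in> M)" for x
  have pM: "(x, p x) \<in> M" for x
    unfolding p_def using tot[of x] fn by (metis theI)
  have pu: "(x,a) \<in> M \<Longrightarrow> p x = a" for x a using pM fn by blast
  have "linear p"
  proof (rule linearI)
    fix x y show "p (x + y) = p x + p y" using pu[OF add[OF pM pM]] .
  next
    fix r x show "p (r *\<^sub>R x) = r *\<^sub>R p x" using pu[OF sc[OF pM]] by simp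
  qed
  moreover have "\<forall>x. p x \<le> h x" using dom pM by blast
  ultimately show ?thesis by blast
qed

lemma cvx_fin:
  assumes "convex_fun f" "0 \<le> t" "t \<le> 1" "f x = ereal a" "f y = ereal b"
  shows "f ((1 - t) *\<^sub>R x + t *\<^sub>R y) \<le> ereal ((1 - t) * a + t * b)"
  using assms unfolding convex_fun_def by (metis times_ereal.simps(1) plus_ereal.simps(1))

lemma sandwich:
  fixes f :: "'a::real_normed_vector \<Rightarrow> ereal" and K :: "'a \<Rightarrow> real"
  assumes fcvx: "convex_fun f" and nm: "\<forall>x. f x \<noteq> -\<infinity>" and fz: "f z = ereal fzr"
    and Kcvx: "\<And>x y t. 0 \<le> t \<Longrightarrow> t \<le> 1 \<Longrightarrow> K ((1-t) *\<^sub>R x + t *\<^sub>R y) \<le> (1-t) * K x + t * K y"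
    and KL: "\<And>x y. K x - K y \<le> L * norm (x - y)"
    and mn: "\<And>x. f z + ereal (K z) \<le> f x + ereal (K x)"
  shows "\<exists>p. bounded_linear p \<and> (\<forall>x. f z + ereal (p (x - z)) \<le> f x) \<and> (\<forall>x. K z - K x \<le> p (x - z))"
proof -
  define D where "D = {a. f (z + a) \<noteq> \<infinity>}"
  define fr where "fr a = real_of_ereal (f (z + a))" for a
  have frD: "a \<in> D \<Longrightarrow> f (z + a) = ereal (fr a)" for a
    unfolding D_def fr_def using nm by (cases "f (z + a)") auto
  have D0: "0 \<in> D" unfolding D_def using fz by simp
  have fr0: "fr 0 = fzr" unfolding fr_def using fz by simp
  have mnD: "fzr + K z \<le> fr a + K (z + a)" if "a \<in> D" for a
    using mn[of "z + a"] frD[OF that] fz by simp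
  define e where "e u a = fr a - fzr + K (z + a - u) - K z" for u a
  have elow: "- (L * norm u) \<le> e u a" if "a \<in> D" for u a
  proof -
    have "K (z + a) - K (z + a - u) \<le> L * norm u" using KL[of "z + a" "z + a - u"] by simp
    then show ?thesis using mnD[OF that] unfolding e_def by simp
  qed
  define h where "h u = Inf (e u ` D)" for u
  have bdd: "bdd_below (e u ` D)" for u using elow by (auto simp: bdd_below_def)
  have hle: "a \<in> D \<Longrightarrow> h u \<le> e u a" for u a unfolding h_def using bdd by (auto intro: cInf_lower)
  have hge: "(\<And>a. a \<in> D \<Longrightarrow> c \<le> e u a) \<Longrightarrow> c \<le> h u" for u c
    unfolding h_def using D0 by (auto intro: cInf_greatest)
  have h0: "0 \<le> h 0"
  proof (rule hge)
    fix a assume "a \<in> D" from mnD[OF this] show "0 \<le> e 0 a" unfolding e_def by simp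
  qed
  have hcvx: "h ((1-t) *\<^sub>R u + t *\<^sub>R v) \<le> (1-t) * h u + t * h v" if t: "0 \<le> t" "t \<le> 1" for u v t
  proof (cases "t = 0 \<or> t = 1")
    case True then show ?thesis by auto
  next
    case False
    with t have t0: "0 < t" "t < 1" by auto
    define w where "w = (1-t) *\<^sub>R u + t *\<^sub>R v"
    have step: "h w \<le> (1-t) * e u a + t * e v b" if a: "a \<in> D" and b: "b \<in> D" for a b
    proof -
      define c where "c = (1-t) *\<^sub>R a + t *\<^sub>R b"
      have zc: "z + c = (1-t) *\<^sub>R (z + a) + t *\<^sub>R (z + b)" unfolding c_def by (simp add: algebra_simps)
      have fc: "f (z + c) \<le> ereal ((1-t) * fr a + t * fr b)"
        unfolding zc by (rule cvx_fin[OF fcvx t frD[OF a] frD[OF b]])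
      then have cD: "c \<in> D" unfolding D_def by auto
      have frc: "fr c \<le> (1-t) * fr a + t * fr b" using fc frD[OF cD] by simp
      have zcw: "z + c - w = (1-t) *\<^sub>R (z + a - u) + t *\<^sub>R (z + b - v)"
        unfolding c_def w_def by (simp add: algebra_simps)
      have Kc: "K (z + c - w) \<le> (1-t) * K (z + a - u) + t * K (z + b - v)"
        unfolding zcw by (rule Kcvx[OF t])
      have "h w \<le> e w c" by (rule hle[OF cD])
      also have "\<dots> \<le> (1-t) * e u a + t * e v b"
        using frc Kc unfolding e_def by (simp add: algebra_simps)
      finally show ?thesis .
    qed
    have s1: "h w \<le> (1-t) * h u + t * e v b" if b: "b \<in> D" for b
    proof -
      have "(h w - t * e v b) / (1-t) \<le> h u"
      proof (rule hge)
        fix a assume "a \<in> D"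
        from step[OF this b] t0 show "(h w - t * e v b) / (1-t) \<le> e u a"
          by (simp add: divide_simps algebra_simps)
      qed
      with t0 show ?thesis by (simp add: divide_simps algebra_simps)
    qed
    have "(h w - (1-t) * h u) / t \<le> h v"
    proof (rule hge)
      fix b assume "b \<in> D"
      from s1[OF this] t0 show "(h w - (1-t) * h u) / t \<le> e v b"
        by (simp add: divide_simps algebra_simps)
    qed
    with t0 show ?thesis unfolding w_def by (simp add: divide_simps algebra_simps)
  qed
  obtain p where lp: "linear p" and ph: "\<And>x. p x \<le> h x" using HB[OF hcvx h0] by blast
  have p1: "u \<in> D \<Longrightarrow> fzr + p u \<le> fr u" for u
    using ph[of u] hle[of u u] unfolding e_def by simp
  have p2: "p u \<le> K (z - u) - K z" for u
    using ph[of u] hle[OF D0, of u] fr0 unfolding e_def by simp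
  have pneg: "p (- u) = - p u" for u using lp by (simp add: linear_neg)
  have pb: "norm (p u) \<le> norm u * L" for u
  proof -
    have "p u \<le> L * norm u" using p2[of u] KL[of "z - u" z] by simp
    moreover have "- p u \<le> L * norm u" using p2[of "-u"] KL[of "z + u" z] pneg[of u] by simp
    ultimately show ?thesis by (simp add: abs_le_iff mult.commute)
  qed
  have "bounded_linear p"
    by (rule bounded_linear_intro[OF linear_add[OF lp] linear_scale[OF lp] pb])
  moreover have "\<forall>x. f z + ereal (p (x - z)) \<le> f x"
  proof
    fix x show "f z + ereal (p (x - z)) \<le> f x"
    proof (cases "x - z \<in> D")
      case True
      then show ?thesis using p1[OF True] frD[OF True] fz by simp
    next
      case False then have "f x = \<infinity>" unfolding D_def by simp
      then show ?thesis by simp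
    qed
  qed
  moreover have "\<forall>x. K z - K x \<le> p (x - z)"
  proof
    fix x
    have "p (z - x) \<le> K x - K z" using p2[of "z - x"] by simp
    moreover have "p (x - z) = - p (z - x)" using pneg[of "z - x"] by simp
    ultimately show "K z - K x \<le> p (x - z)" by simp
  qed
  ultimately show ?thesis by blast
qed

lemma ekeland:
  fixes F :: "'a::banach \<Rightarrow> ereal"
  assumes lsc: "lsc_fun F" and lb: "\<And>x. ereal m \<le> F x" and x0: "F x0 \<noteq> \<infinity>" and ep: "0 < \<epsilon>"
  shows "\<exists>z. F z \<le> F x0 \<and> (\<forall>x. F z \<le> F x + ereal (\<epsilon> * norm (x - z)))"
proof -
  define Fr where "Fr x = real_of_ereal (F x)" for x
  have Fe: "F x \<noteq> \<infinity> \<Longrightarrow> F x = ereal (Fr x)" for x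
    unfolding Fr_def using lb[of x] by (cases "F x") auto
  have Fm: "F x \<noteq> \<infinity> \<Longrightarrow> m \<le> Fr x" for x using lb[of x] Fe[of x] by simp
  define S where "S x = {y. F y \<noteq> \<infinity> \<and> Fr y + \<epsilon> * norm (y - x) \<le> Fr x}" for x
  have refl: "F x \<noteq> \<infinity> \<Longrightarrow> x \<in> S x" for x unfolding S_def by simp
  have Sfin: "y \<in> S x \<Longrightarrow> F y \<noteq> \<infinity>" for x y unfolding S_def by simp
  have trans: "w \<in> S x" if "y \<in> S x" "w \<in> S y" for x y w
  proof -
    have "norm (w - x) \<le> norm (w - y) + norm (y - x)" using norm_triangle_ineq[of "w - y" "y - x"] by simp
    then have "\<epsilon> * norm (w - x) \<le> \<epsilon> * norm (w - y) + \<epsilon> * norm (y - x)"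
      using ep by (metis distrib_left mult_left_mono less_imp_le)
    then show ?thesis using that unfolding S_def by auto
  qed
  have clo: "\<exists>d>0. \<forall>w. dist w y < d \<longrightarrow> w \<notin> S x" if fx: "F x \<noteq> \<infinity>" and y: "y \<notin> S x" for x y
  proof (cases "F y = \<infinity>")
    case True
    have "ereal (Fr x) < F y" using True by simp
    then have "eventually (\<lambda>w. ereal (Fr x) < F w) (at y)" using lsc unfolding lsc_fun_def by blast
    then obtain d where d: "d > 0" "\<And>w. w \<noteq> y \<Longrightarrow> dist w y < d \<Longrightarrow> ereal (Fr x) < F w"
      unfolding eventually_at by auto
    show ?thesis
    proof (intro exI[of _ d] conjI allI impI d(1))
      fix w assume "dist w y < d"
      show "w \<notin> S x"
      proof (cases "w = y")
        case True then show ?thesis using y by simp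
      next
        case False
        then have "ereal (Fr x) < F w" using d \<open>dist w y < d\<close> by blast
        show ?thesis
        proof
          assume "w \<in> S x"
          then have "F w \<noteq> \<infinity>" "Fr w + \<epsilon> * norm (w - x) \<le> Fr x" unfolding S_def by auto
          moreover have "Fr x < Fr w" using \<open>ereal (Fr x) < F w\<close> Fe[OF \<open>F w \<noteq> \<infinity>\<close>] by simp
          moreover have "0 \<le> \<epsilon> * norm (w - x)" using ep by simp
          ultimately show False by linarith
        qed
      qed
    qed
  next
    case False
    define g where "g = Fr y + \<epsilon> * norm (y - x) - Fr x"
    have gp: "g > 0" using y False unfolding S_def g_def by auto
    have "ereal (Fr y - g/2) < F y" using Fe[OF False] gp by simp
    then have "eventually (\<lambda>w. ereal (Fr y - g/2) < F w) (at y)" using lsc unfolding lsc_fun_def by blast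
    then obtain d1 where d1: "d1 > 0" "\<And>w. w \<noteq> y \<Longrightarrow> dist w y < d1 \<Longrightarrow> ereal (Fr y - g/2) < F w"
      unfolding eventually_at by auto
    define d where "d = min d1 (g / (4 * \<epsilon>))"
    have dp: "d > 0" unfolding d_def using d1 gp ep by simp
    show ?thesis
    proof (intro exI[of _ d] conjI allI impI dp)
      fix w assume dw: "dist w y < d"
      show "w \<notin> S x"
      proof (cases "w = y")
        case True then show ?thesis using y by simp
      next
        case wy: False
        show ?thesis
        proof (cases "F w = \<infinity>")
          case True then show ?thesis unfolding S_def by simp
        next
          case Fw: False
          have "ereal (Fr y - g/2) < F w" using d1(2)[OF wy] dw unfolding d_def by simp
          then have a1: "Fr y - g/2 < Fr w" using Fe[OF Fw] by simp
          have "norm (y - x) \<le> norm (y - w) + norm (w - x)" using norm_triangle_ineq[of "y - w" "w - x"] by simp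
          moreover have "norm (y - w) < g / (4 * \<epsilon>)" using dw unfolding d_def by (simp add: dist_norm norm_minus_commute)
          ultimately have "norm (y - x) - g / (4 * \<epsilon>) < norm (w - x)" by simp
          then have "\<epsilon> * (norm (y - x) - g / (4 * \<epsilon>)) < \<epsilon> * norm (w - x)" using ep by simp
          then have "\<epsilon> * norm (y - x) - g/4 < \<epsilon> * norm (w - x)" using ep by (simp add: right_diff_distrib)
          then have "Fr x < Fr w + \<epsilon> * norm (w - x)" using a1 gp g_def by linarith
          then show ?thesis unfolding S_def by simp
        qed
      qed
    qed
  qed
  define mm where "mm x = Inf (Fr ` S x)" for x
  have mmle: "y \<in> S x \<Longrightarrow> mm x \<le> Fr y" for x y
    unfolding mm_def by (rule cInf_lower) (auto simp: bdd_below_def S_def intro!: exI[of _ m] Fm)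
  have ex: "\<exists>y. y \<in> S x \<and> Fr y \<le> mm x + \<delta>" if "F x \<noteq> \<infinity>" "\<delta> > 0" for x \<delta>
  proof (rule ccontr)
    assume "\<not> ?thesis"
    then have "\<And>y. y \<in> S x \<Longrightarrow> mm x + \<delta> \<le> Fr y" by force
    then have "mm x + \<delta> \<le> mm x" unfolding mm_def using refl[OF that(1)]
      by (intro cInf_greatest) auto
    then show False using that by simp
  qed
  define nx where "nx x n = (SOME y. y \<in> S x \<and> Fr y \<le> mm x + (1/2)^n)" for x n
  have nxp: "F x \<noteq> \<infinity> \<Longrightarrow> nx x n \<in> S x \<and> Fr (nx x n) \<le> mm x + (1/2)^n" for x n
    unfolding nx_def by (rule someI_ex) (rule ex, auto)
  define xs where "xs = rec_nat x0 (\<lambda>n x. nx x n)"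
  have xs0: "xs 0 = x0" and xsS: "xs (Suc n) = nx (xs n) n" for n unfolding xs_def by simp_all
  have fin: "F (xs n) \<noteq> \<infinity>" for n
  proof (induction n)
    case 0 show ?case using x0 xs0 by simp
  next
    case (Suc n) show ?case using nxp[OF Suc, of n] Sfin xsS by metis
  qed
  have st: "xs (Suc n) \<in> S (xs n)" "Fr (xs (Suc n)) \<le> mm (xs n) + (1/2)^n" for n
    using nxp[OF fin[of n], of n] xsS by auto
  have nest: "xs (n + k) \<in> S (xs n)" for n k
  proof (induction k)
    case 0 show ?case using refl[OF fin] by simp
  next
    case (Suc k) show ?case using trans[OF Suc st(1)[of "n + k"]] by simp
  qed
  have D1: "\<epsilon> * norm (y - xs (Suc n)) \<le> (1/2)^n" if "y \<in> S (xs (Suc n))" for y n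
  proof -
    have "y \<in> S (xs n)" using trans[OF st(1) that] .
    then have "mm (xs n) \<le> Fr y" by (rule mmle)
    moreover have "Fr y + \<epsilon> * norm (y - xs (Suc n)) \<le> Fr (xs (Suc n))" using that unfolding S_def by simp
    ultimately show ?thesis using st(2)[of n] by simp
  qed
  have D2: "norm (y - xs (Suc n)) \<le> (1/2)^n / \<epsilon>" if "y \<in> S (xs (Suc n))" for y n
    using D1[OF that] ep by (simp add: field_simps)
  have "Cauchy xs"
  proof (rule CauchyI)
    fix e :: real assume e: "0 < e"
    obtain N where N: "(1/2::real)^N < e * \<epsilon> / 2" using real_arch_pow_inv[of "e * \<epsilon> / 2" "1/2"] e ep by auto
    have b: "norm (xs k - xs (Suc N)) \<le> (1/2)^N / \<epsilon>" if "k \<ge> Suc N" for k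
      using D2[OF nest[of "Suc N" "k - Suc N"]] that by simp
    have "(1/2)^N / \<epsilon> < e / 2" using N ep by (simp add: field_simps)
    show "\<exists>M. \<forall>m\<ge>M. \<forall>n\<ge>M. norm (xs m - xs n) < e"
    proof (intro exI[of _ "Suc N"] allI impI)
      fix m n assume "Suc N \<le> m" "Suc N \<le> n"
      have "norm (xs m - xs n) \<le> norm (xs m - xs (Suc N)) + norm (xs n - xs (Suc N))"
        using norm_triangle_ineq4[of "xs m - xs (Suc N)" "xs n - xs (Suc N)"] by simp
      also have "\<dots> \<le> (1/2)^N / \<epsilon> + (1/2)^N / \<epsilon>" using b \<open>Suc N \<le> m\<close> \<open>Suc N \<le> n\<close> by (intro add_mono) auto
      also have "\<dots> < e" using \<open>(1/2)^N / \<epsilon> < e / 2\<close> by linarith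
      finally show "norm (xs m - xs n) < e" .
    qed
  qed
  then obtain z where lim: "xs \<longlonglongrightarrow> z" using Cauchy_convergent_iff convergent_def by blast
  have zS: "z \<in> S (xs n)" for n
  proof (rule ccontr)
    assume "z \<notin> S (xs n)"
    then obtain d where d: "d > 0" "\<And>w. dist w z < d \<Longrightarrow> w \<notin> S (xs n)" using clo[OF fin] by blast
    obtain M where M: "\<And>k. k \<ge> M \<Longrightarrow> dist (xs k) z < d" using lim d(1) unfolding lim_sequentially by blast
    have "xs (n + M) \<notin> S (xs n)" using d(2) M[of "n + M"] by simp
    then show False using nest by blast
  qed
  have "z \<in> S x0" using zS[of 0] xs0 by simp
  then have Fz: "F z \<noteq> \<infinity>" "Fr z \<le> Fr x0" unfolding S_def using ep by (auto intro: order_trans[rotated])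
  have "F z \<le> F x0" using Fe[OF Fz(1)] Fe[OF x0] Fz(2) by simp
  moreover have "F z \<le> F x + ereal (\<epsilon> * norm (x - z))" for x
  proof (cases "F x = \<infinity>")
    case True then show ?thesis by simp
  next
    case Fx: False
    show ?thesis
    proof (rule ccontr)
      assume "\<not> ?thesis"
      then have lt: "Fr x + \<epsilon> * norm (x - z) < Fr z" using Fe[OF Fx] Fe[OF Fz(1)] by simp
      then have xS: "x \<in> S z" unfolding S_def using Fx by simp
      have "norm (x - z) \<le> 2 * ((1/2)^n / \<epsilon>)" for n
      proof -
        have "norm (x - xs (Suc n)) \<le> (1/2)^n / \<epsilon>" using D2 trans[OF zS xS] by blast
        moreover have "norm (z - xs (Suc n)) \<le> (1/2)^n / \<epsilon>" using D2 zS by blast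
        moreover have "norm (x - z) \<le> norm (x - xs (Suc n)) + norm (z - xs (Suc n))"
          using norm_triangle_ineq4[of "x - xs (Suc n)" "z - xs (Suc n)"] by simp
        ultimately show ?thesis by simp
      qed
      moreover have "x = z"
      proof (rule ccontr)
        assume "x \<noteq> z"
        then have np: "norm (x - z) > 0" by simp
        obtain N where N: "(1/2::real)^N < norm (x - z) * \<epsilon> / 2"
          using real_arch_pow_inv[of "norm (x - z) * \<epsilon> / 2" "1/2"] np ep by auto
        then have "2 * ((1/2)^N / \<epsilon>) < norm (x - z)" using ep by (simp add: field_simps)
        with calculation[of N] show False by simp
      qed
      then show False using lt by simp
    qed
  qed
  ultimately show ?thesis by blast
qed

lemma lsc_add:
  fixes f :: "'a::metric_space \<Rightarrow> ereal"
  assumes lsc: "lsc_fun f" and nm: "\<And>x. f x \<noteq> -\<infinity>" and K: "\<And>x. isCont K x"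
  shows "lsc_fun (\<lambda>x. f x + ereal (K x))"
  unfolding lsc_fun_def
proof (intro allI impI)
  fix x0 c assume c: "c < f x0 + ereal (K x0)"
  show "eventually (\<lambda>x. c < f x + ereal (K x)) (at x0)"
  proof (cases c)
    case MInf
    then show ?thesis using nm by (auto intro!: always_eventually)
  next
    case PInf then show ?thesis using c by simp
  next
    case (real c0)
    then have lt: "ereal (c0 - K x0) < f x0" using c by (cases "f x0") auto
    obtain e where e: "e > 0" "ereal (c0 - K x0 + e) < f x0"
    proof (cases "f x0")
      case (real v)
      then show ?thesis using lt by (intro that[of "(v - (c0 - K x0))/2"]) (auto simp: field_simps)
    next
      case PInf then show ?thesis using that[of 1] by auto
    next
      case MInf then show ?thesis using nm by auto
    qed
    have ev1: "eventually (\<lambda>x. ereal (c0 - K x0 + e) < f x) (at x0)"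
      using lsc e(2) unfolding lsc_fun_def by blast
    have "(K \<longlongrightarrow> K x0) (at x0)" using K[of x0] by (simp add: isCont_def)
    then have ev2: "eventually (\<lambda>x. dist (K x) (K x0) < e) (at x0)" using e(1) by (rule tendstoD)
    show ?thesis
      using ev1 ev2
    proof eventually_elim
      case (elim x)
      show ?case
      proof (cases "f x")
        case (real v)
        then show ?thesis using elim \<open>c = ereal c0\<close> by (auto simp: dist_real_def abs_less_iff)
      next
        case PInf then show ?thesis using \<open>c = ereal c0\<close> by simp
      next
        case MInf then show ?thesis using nm by auto
      qed
    qed
  qed
qed

lemma lowb:
  fixes f :: "'a::real_normed_vector \<Rightarrow> ereal"
  assumes cvx: "convex_fun f" and lsc: "lsc_fun f" and nm: "\<And>x. f x \<noteq> -\<infinity>" and fx1: "f x1 = ereal a"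
  shows "\<exists>B\<ge>0. \<forall>x. ereal (a - 1 - B * norm (x - x1)) \<le> f x"
proof -
  have "ereal (a - 1) < f x1" using fx1 by simp
  then have "eventually (\<lambda>w. ereal (a - 1) < f w) (at x1)" using lsc unfolding lsc_fun_def by blast
  then obtain d where d: "d > 0" "\<And>w. w \<noteq> x1 \<Longrightarrow> dist w x1 < d \<Longrightarrow> ereal (a - 1) < f w"
    unfolding eventually_at by auto
  have "ereal (a - 1 - (2/d) * norm (x - x1)) \<le> f x" for x
  proof (cases "f x")
    case PInf then show ?thesis by simp
  next
    case MInf then show ?thesis using nm by simp
  next
    case (real b)
    show ?thesis
    proof (cases "norm (x - x1) < d")
      case True
      have "ereal (a - 1) \<le> f x"
      proof (cases "x = x1")
        case True then show ?thesis using fx1 by simp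
      next
        case False then show ?thesis using d(2)[of x] True by (simp add: dist_norm less_imp_le)
      qed
      moreover have "0 \<le> (2/d) * norm (x - x1)" using d by simp
      ultimately show ?thesis using real by simp
    next
      case False
      define l where "l = (d/2) / norm (x - x1)"
      have nx: "norm (x - x1) > 0" using False d by (auto simp del: norm_le_zero_iff)
      have l0: "0 < l" "l \<le> 1" unfolding l_def using nx False d by (auto simp: field_simps)
      define y where "y = (1 - l) *\<^sub>R x1 + l *\<^sub>R x"
      have yx: "y - x1 = l *\<^sub>R (x - x1)" unfolding y_def by (simp add: algebra_simps)
      have ny: "norm (y - x1) = d/2" unfolding yx l_def using nx d by simp
      then have "y \<noteq> x1" using d by auto
      then have "ereal (a - 1) < f y" using d(2)[of y] ny d by (simp add: dist_norm)
      also have "f y \<le> ereal ((1 - l) * a + l * b)" unfolding y_def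
        by (rule cvx_fin[OF cvx]) (use l0 fx1 real in auto)
      finally have "a - 1 < (1 - l) * a + l * b" by simp
      then have "l * a - 1 < l * b" by (simp add: algebra_simps)
      then have "a - 1 / l < b" using l0 by (simp add: field_simps)
      moreover have "1 / l = (2/d) * norm (x - x1)" unfolding l_def using d nx by (simp add: field_simps)
      ultimately show ?thesis using real by simp
    qed
  qed
  moreover have "2/d \<ge> 0" using d by simp
  ultimately show ?thesis by blast
qed

lemma nrm_cvx:
  fixes x y z :: "'a::real_normed_vector"
  assumes "0 \<le> t" "t \<le> 1"
  shows "norm ((1-t) *\<^sub>R x + t *\<^sub>R y - z) \<le> (1-t) * norm (x - z) + t * norm (y - z)"
proof -
  have "(1-t) *\<^sub>R x + t *\<^sub>R y - z = (1-t) *\<^sub>R (x - z) + t *\<^sub>R (y - z)" by (simp add: algebra_simps)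
  then have "norm ((1-t) *\<^sub>R x + t *\<^sub>R y - z) \<le> norm ((1-t) *\<^sub>R (x - z)) + norm (t *\<^sub>R (y - z))"
    using norm_triangle_ineq by metis
  then show ?thesis using assms by simp
qed

theorem proposition1:
  fixes f :: "'a::banach \<Rightarrow> ereal"
  assumes "proper_fun f" and "convex_fun f" and "lsc_fun f"
    and "\<forall>x. \<forall>p \<in> subdiff f x. p x \<ge> 0"
  shows "(\<lambda>_. 0) \<in> subdiff f 0"
proof (rule ccontr)
  assume nc: "(\<lambda>_. 0) \<notin> subdiff f 0"
  have nm: "\<And>x. f x \<noteq> -\<infinity>" using assms(1) unfolding proper_fun_def by blast
  obtain x1 where x1: "f x1 \<noteq> \<infinity>" "f x1 < f 0"
  proof (cases "f 0 = \<infinity>")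
    case True
    obtain x where "f x \<noteq> \<infinity>" using assms(1) unfolding proper_fun_def by blast
    then show ?thesis using True that[of x] by simp
  next
    case False
    then obtain x where "\<not> f 0 \<le> f x" using nc unfolding subdiff_def by (auto simp: bounded_linear_zero)
    then have l: "f x < f 0" by (simp add: not_le)
    then have "f x \<noteq> \<infinity>" using not_le by fastforce
    then show ?thesis using that[of x] l by blast
  qed
  obtain a where fa: "f x1 = ereal a" using x1(1) nm[of x1] by (cases "f x1") auto
  obtain \<delta> where dp: "\<delta> > 0" and dl: "ereal (a + \<delta> * norm x1) < f 0"
  proof (cases "f 0")
    case PInf then show ?thesis using that[of 1] by simp
  next
    case MInf then show ?thesis using nm by simp
  next
    case (real v)
    then have av: "a < v" using x1(2) fa by simp
    define \<delta> where "\<delta> = (v - a) / (2 * (norm x1 + 1))"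
    have "2 * (norm x1 + 1) > (0::real)" by (smt (verit) norm_ge_zero)
    then have "\<delta> > 0" unfolding \<delta>_def using av by (intro divide_pos_pos) auto
    moreover have "\<delta> * norm x1 \<le> \<delta> * (norm x1 + 1)" using \<open>\<delta> > 0\<close> by simp
    moreover have "\<delta> * (norm x1 + 1) = (v - a)/2" unfolding \<delta>_def
      using \<open>2 * (norm x1 + 1) > 0\<close> by (simp add: field_simps)
    ultimately show ?thesis using that[of \<delta>] real av by simp
  qed
  obtain B where B: "B \<ge> 0" "\<And>x. ereal (a - 1 - B * norm (x - x1)) \<le> f x"
    using lowb[OF assms(2,3) nm fa] by blast
  define r where "r = norm x1"
  define K0 where "K0 x = \<delta> * norm x + B * max 0 (norm x - r)" for x :: 'a
  define F where "F x = f x + ereal (K0 x)" for x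
  have K0c: "isCont K0 x" for x unfolding K0_def by (intro continuous_intros)
  have Flsc: "lsc_fun F" unfolding F_def by (rule lsc_add[OF assms(3) nm K0c])
  have Flb: "ereal (a - 1 - B * r - B * r) \<le> F x" for x
  proof (cases "f x")
    case PInf then show ?thesis unfolding F_def by simp
  next
    case MInf then show ?thesis using nm by simp
  next
    case (real b)
    have "a - 1 - B * norm (x - x1) \<le> b" using B(2)[of x] real by simp
    moreover have "norm (x - x1) \<le> norm x + r" unfolding r_def by (rule norm_triangle_ineq4)
    then have "B * norm (x - x1) \<le> B * (norm x + r)" using B(1) by (intro mult_left_mono)
    moreover have "B * (norm x - r) \<le> B * max 0 (norm x - r)" using B(1) by (intro mult_left_mono) auto
    moreover have "0 \<le> \<delta> * norm x" using dp by simp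
    ultimately have "a - 1 - B * r - B * r \<le> b + K0 x" unfolding K0_def by (simp add: algebra_simps)
    then show ?thesis unfolding F_def using real by simp
  qed
  have K0x1: "K0 x1 = \<delta> * norm x1" unfolding K0_def r_def by simp
  have Fx1: "F x1 = ereal (a + \<delta> * norm x1)" unfolding F_def fa K0x1 by simp
  define \<epsilon> where "\<epsilon> = \<delta> / 2"
  have ep: "\<epsilon> > 0" unfolding \<epsilon>_def using dp by simp
  obtain z where z1: "F z \<le> F x1" and z2: "\<And>x. F z \<le> F x + ereal (\<epsilon> * norm (x - z))"
    using ekeland[OF Flsc Flb, of x1 \<epsilon>] Fx1 ep by auto
  have F0: "F 0 = f 0" unfolding F_def K0_def r_def by simp
  have "F z < F 0" using z1 Fx1 dl F0 by simp
  then have z0: "z \<noteq> 0" by auto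
  have fzf: "f z \<noteq> \<infinity>" using z1 Fx1 unfolding F_def by auto
  obtain fzr where fzr: "f z = ereal fzr" using fzf nm[of z] by (cases "f z") auto
  define K where "K x = K0 x + \<epsilon> * norm (x - z)" for x
  have Kcvx: "K ((1-t) *\<^sub>R x + t *\<^sub>R y) \<le> (1-t) * K x + t * K y" if t: "0 \<le> t" "t \<le> 1" for x y t
  proof -
    have n0: "norm ((1-t) *\<^sub>R x + t *\<^sub>R y) \<le> (1-t) * norm x + t * norm y"
      using nrm_cvx[OF t, of x y 0] by simp
    have nz: "norm ((1-t) *\<^sub>R x + t *\<^sub>R y - z) \<le> (1-t) * norm (x - z) + t * norm (y - z)"
      by (rule nrm_cvx[OF t])
    have m: "max 0 (norm ((1-t) *\<^sub>R x + t *\<^sub>R y) - r) \<le> (1-t) * max 0 (norm x - r) + t * max 0 (norm y - r)"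
    proof -
      have "norm ((1-t) *\<^sub>R x + t *\<^sub>R y) - r \<le> (1-t) * (norm x - r) + t * (norm y - r)"
        using n0 by (simp add: algebra_simps)
      also have "\<dots> \<le> (1-t) * max 0 (norm x - r) + t * max 0 (norm y - r)"
        using t by (intro add_mono mult_left_mono) auto
      finally show ?thesis using t by (simp add: max_def)
    qed
    have "\<delta> * norm ((1-t) *\<^sub>R x + t *\<^sub>R y) \<le> \<delta> * ((1-t) * norm x + t * norm y)"
      using n0 dp by simp
    moreover have "B * max 0 (norm ((1-t) *\<^sub>R x + t *\<^sub>R y) - r) \<le> B * ((1-t) * max 0 (norm x - r) + t * max 0 (norm y - r))"
      using m B(1) by (rule mult_left_mono)
    moreover have "\<epsilon> * norm ((1-t) *\<^sub>R x + t *\<^sub>R y - z) \<le> \<epsilon> * ((1-t) * norm (x - z) + t * norm (y - z))"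
      using nz ep by simp
    ultimately show ?thesis unfolding K_def K0_def by (simp add: algebra_simps)
  qed
  have KL: "K x - K y \<le> (\<delta> + B + \<epsilon>) * norm (x - y)" for x y
  proof -
    have n1: "norm x - norm y \<le> norm (x - y)" by (rule norm_triangle_ineq2)
    have n2: "norm (x - z) - norm (y - z) \<le> norm (x - y)" using norm_triangle_ineq2[of "x - z" "y - z"] by simp
    have n3: "max 0 (norm x - r) - max 0 (norm y - r) \<le> norm (x - y)" using n1 norm_ge_zero[of "x - y"] by (smt (verit) max_def)
    have "\<delta> * norm x - \<delta> * norm y \<le> \<delta> * norm (x - y)" using n1 dp by (simp add: right_diff_distrib[symmetric])
    moreover have "B * max 0 (norm x - r) - B * max 0 (norm y - r) \<le> B * norm (x - y)"
      using n3 B(1) by (simp add: right_diff_distrib[symmetric] mult_left_mono)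
    moreover have "\<epsilon> * norm (x - z) - \<epsilon> * norm (y - z) \<le> \<epsilon> * norm (x - y)" using n2 ep by (simp add: right_diff_distrib[symmetric])
    ultimately show ?thesis unfolding K_def K0_def by (simp add: algebra_simps)
  qed
  have mn: "f z + ereal (K z) \<le> f x + ereal (K x)" for x
  proof -
    have "f z + ereal (K z) = F z" unfolding F_def K_def by simp
    also have "\<dots> \<le> F x + ereal (\<epsilon> * norm (x - z))" by (rule z2)
    also have "\<dots> = f x + ereal (K x)" unfolding F_def K_def by (simp add: add.assoc)
    finally show ?thesis .
  qed
  obtain p where pbl: "bounded_linear p" and p1: "\<forall>x. f z + ereal (p (x - z)) \<le> f x"
    and p2: "\<forall>x. K z - K x \<le> p (x - z)"
    using sandwich[OF assms(2) _ fzr Kcvx KL mn] nm by blast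
  have "p \<in> subdiff f z" unfolding subdiff_def using fzf pbl p1 by simp
  then have pz: "p z \<ge> 0" using assms(4) by blast
  have "K z - K 0 \<le> p (0 - z)" using p2 by blast
  moreover have "p (0 - z) = - p z" using pbl by (simp add: linear_simps)
  moreover have "K z \<ge> \<delta> * norm z" unfolding K_def K0_def using B(1) by simp
  moreover have "K 0 = \<epsilon> * norm z" unfolding K_def K0_def r_def by simp
  ultimately have "\<delta> * norm z - \<epsilon> * norm z \<le> 0" using pz by linarith
  then have "\<delta> * norm z \<le> 0" unfolding \<epsilon>_def by simp
  then have "norm z \<le> 0" using dp by (simp add: mult_le_0_iff)
  then show False using z0 by simp
qed

end
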